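(* Let $u\in S$. Then there exist $(\varepsilon_i)_{i\ge4}$ and $(\varepsilon'_i)_{i\ge4}$ in $\mathcal{D}^\infty$ such that $\sum_{i=4}^\infty\varepsilon_i\alpha^i=u+\sum_{i=4}^\infty\varepsilon'_i\alpha^i$.
   Context: Let $P(x)=x^4-x^3-x^2-x-1$. Its roots are $\beta=\beta_1\approx 1.9275$, a real root $\beta_2\approx-0.7748$, and a pair of complex conjugate roots $\beta_3\approx-0.0763+0.8147i$ and $\overline{\beta_3}$. For $i\in\mathbb{Z}$ put $\alpha^i=(\beta_2^i,\beta_3^i)\in\mathbb{R}\times\mathbb{C}$, with $\alpha^0=1=(1,1)$; arithmetic is componentwise and an integer $n$ is identified with $(n,n)$. $\mathcal{D}^\infty$ is the set of sequences $(\varepsilon_i)_{i\ge l}$, $l\in\mathbb{Z}$, with $\varepsilon_i\in\{0,1\}$ and containing no four consecutive $1$'s. $S$ is the set $\{\pm\sum_{i=0}^3c_i\alpha^i : c_i\in\{0,1\},\ c_0c_1c_2c_3\neq1111\}\cup\{\pm(\alpha^{-1}+1+\alpha^2),\pm(\alpha^{-2}+\alpha^{-1}+\alpha),\pm(\alpha^{-3}+\alpha^{-2}+1+\alpha^3)\}$. *)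

theory Defs
  imports Complex_Main
begin

definition beta2 :: real where
  "beta2 = (THE x::real. x^4 - x^3 - x^2 - x - 1 = 0 \<and> x < 0)"

definition beta3 :: complex where
  "beta3 = (THE z::complex. z^4 - z^3 - z^2 - z - 1 = 0 \<and> Im z > 0)"

definition alpha :: "int \<Rightarrow> real \<times> complex" where
  "alpha i = (beta2 powi i, beta3 powi i)"

definition lincomb :: "(int \<Rightarrow> int) \<Rightarrow> int set \<Rightarrow> real \<times> complex" where
  "lincomb c I = ((\<Sum>i\<in>I. of_int (c i) * fst (alpha i)), (\<Sum>i\<in>I. of_int (c i) * snd (alpha i)))"

definition S :: "(real \<times> complex) set" where
  "S = {lincomb (\<lambda>i. s * c i) {0..3} | s c.
          s \<in> {1, -1} \<and> (\<forall>i. c i \<in> {0, 1}) \<and> \<not> (\<forall>i\<in>{0..3}. c i = 1)}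
     \<union> {lincomb (\<lambda>_. s) {-1, 0, 2} | s. s \<in> {1, -1}}
     \<union> {lincomb (\<lambda>_. s) {-2, -1, 1} | s. s \<in> {1, -1}}
     \<union> {lincomb (\<lambda>_. s) {-3, -2, 0, 3} | s. s \<in> {1, -1}}"

text \<open>A digit sequence (eps_i)_{i >= l} in D^infinity (l a natural number here):
  digits in {0,1}, no four consecutive 1's. Values at indices below l are irrelevant.\<close>

definition Dinf_from :: "nat \<Rightarrow> (nat \<Rightarrow> nat) \<Rightarrow> bool" where
  "Dinf_from l eps \<longleftrightarrow> (\<forall>i\<ge>l. eps i \<in> {0, 1}) \<and>
     (\<forall>i\<ge>l. \<not> (eps i = 1 \<and> eps (i+1) = 1 \<and> eps (i+2) = 1 \<and> eps (i+3) = 1))"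

end

theory Submission
  imports Defs
begin


definition Pr :: "real \<Rightarrow> real" where "Pr x = x^4 - x^3 - x^2 - x - 1"

lemma Pr_cont: "continuous_on T Pr"
  unfolding Pr_def by (intro continuous_intros)

lemma ex_b2: "\<exists>x. -(4/5) \<le> x \<and> x \<le> -(3/4) \<and> Pr x = 0"
proof -
  have "Pr (-(3/4)) \<le> 0" "0 \<le> Pr (-(4/5))" by (simp_all add: Pr_def power_divide)
  then show ?thesis using IVT2'[of Pr "-(3/4)" 0 "-(4/5)"] Pr_cont by auto
qed

lemma ex_b1: "\<exists>x. (19/10) \<le> x \<and> x \<le> (39/20) \<and> Pr x = 0"
proof -
  have "Pr (19/10) \<le> 0" "0 \<le> Pr (39/20)" by (simp_all add: Pr_def power_divide)
  then show ?thesis using IVT'[of Pr "19/10" 0 "39/20"] Pr_cont by auto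
qed

lemma neg_root_bound: "Pr x = 0 \<Longrightarrow> x < 0 \<Longrightarrow> -1 < x"
proof (rule ccontr)
  assume a: "Pr x = 0" "x < 0" "\<not> -1 < x"
  have "Pr x = x^4 + x^2*(-x - 1) + (-x - 1)" unfolding Pr_def by (simp add: algebra_simps power2_eq_square power3_eq_cube power4_eq_xxxx)
  moreover have "x^4 > 0" using a by simp
  moreover have "x^2*(-x - 1) \<ge> 0" using a by simp
  ultimately have "Pr x > 0" using a by linarith
  thus False using a by simp
qed

lemma uniq_neg: assumes "Pr x = 0" "x < 0" "Pr y = 0" "y < 0" shows "x = y"
proof (rule ccontr)
  assume ne: "x \<noteq> y"
  have bx: "-1 < x" "-1 < y" using neg_root_bound assms by auto
  have "(x - y) * ((x+y)*(x^2+y^2) - (x^2+x*y+y^2) - (x+y) - 1) = Pr x - Pr y"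
    unfolding Pr_def by (simp add: algebra_simps power2_eq_square power3_eq_cube power4_eq_xxxx)
  hence E: "(x+y)*(x^2+y^2) - (x^2+x*y+y^2) - (x+y) - 1 = 0" using ne assms by simp
  have "(x+y)*(x^2+y^2) < 0" using assms by (intro mult_neg_pos) (auto simp: add_pos_pos)
  moreover have "x^2+x*y+y^2 + (x+y) + 1 = 3/4*(x+y+2/3)^2 + 1/4*(x-y)^2 + 2/3"
    by (simp add: power2_eq_square algebra_simps)
  moreover have "3/4*(x+y+2/3)^2 + 1/4*(x-y)^2 + 2/3 > (0::real)"
    by (simp add: add_nonneg_pos)
  ultimately show False using E by linarith
qed



lemma b2_facts: "Pr beta2 = 0 \<and> -(4/5) \<le> beta2 \<and> beta2 \<le> -(3/4)"
proof -
  obtain x where x: "-(4/5) \<le> x" "x \<le> -(3/4)" "Pr x = 0" using ex_b2 by blast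
  have "beta2 = x" unfolding beta2_def
  proof (rule the_equality)
    show "x ^ 4 - x ^ 3 - x\<^sup>2 - x - 1 = 0 \<and> x < 0" using x by (simp add: Pr_def)
    fix y :: real assume "y ^ 4 - y ^ 3 - y\<^sup>2 - y - 1 = 0 \<and> y < 0"
    thus "y = x" using uniq_neg[of y x] x by (simp add: Pr_def)
  qed
  thus ?thesis using x by simp
qed

definition b1 :: real where "b1 = (SOME x. (19/10) \<le> x \<and> x \<le> (39/20) \<and> Pr x = 0)"

lemma b1_facts: "(19/10) \<le> b1 \<and> b1 \<le> (39/20) \<and> Pr b1 = 0"
  unfolding b1_def using someI_ex[OF ex_b1] .

definition pp :: real where "pp = b1 + beta2 - 1"
definition qq :: real where "qq = b1^2 + b1*beta2 + beta2^2 - b1 - beta2 - 1"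

lemma E_zero: "beta2^3 + (b1 - 1)*beta2^2 + (b1^2 - b1 - 1)*beta2 + (b1^3 - b1^2 - b1 - 1) = 0"
proof -
  have ne: "b1 \<noteq> beta2" using b1_facts b2_facts by auto
  have "(beta2 - b1) * (beta2^3 + (b1 - 1)*beta2^2 + (b1^2 - b1 - 1)*beta2 + (b1^3 - b1^2 - b1 - 1)) = Pr beta2 - Pr b1"
    unfolding Pr_def by (simp add: algebra_simps power2_eq_square power3_eq_cube power4_eq_xxxx)
  thus ?thesis using ne b1_facts b2_facts by simp
qed

lemma factor: fixes z :: complex
  shows "z^4 - z^3 - z^2 - z - 1 = (z - of_real b1) * (z - of_real beta2) * (z^2 + of_real pp * z + of_real qq)"
proof -
  have A: "of_real (Pr b1) = (0::complex)" using b1_facts by simp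
  have B: "of_real (beta2^3 + (b1 - 1)*beta2^2 + (b1^2 - b1 - 1)*beta2 + (b1^3 - b1^2 - b1 - 1)) = (0::complex)"
    using E_zero by simp
  have "z^4 - z^3 - z^2 - z - 1 = (z - of_real b1) * (z - of_real beta2) * (z^2 + of_real pp * z + of_real qq)
     + (z - of_real b1) * of_real (beta2^3 + (b1 - 1)*beta2^2 + (b1^2 - b1 - 1)*beta2 + (b1^3 - b1^2 - b1 - 1))
     + of_real (Pr b1)"
    unfolding Pr_def pp_def qq_def by (simp add: algebra_simps power2_eq_square power3_eq_cube power4_eq_xxxx)
  thus ?thesis using A B by simp
qed

lemma pq_bounds: "(1/10) \<le> pp \<and> pp \<le> (1/5) \<and> (2/5) \<le> qq \<and> qq \<le> (19/20)"
proof -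
  have a: "(19/10) \<le> b1" "b1 \<le> (39/20)" using b1_facts by auto
  have b: "-(4/5) \<le> beta2" "beta2 \<le> -(3/4)" using b2_facts by auto
  have 1: "b1*b1 \<le> (39/20)*(39/20)" using a by (intro mult_mono) auto
  have 2: "b1*b1 \<ge> (19/10)*(19/10)" using a by (intro mult_mono) auto
  have 3: "(-beta2)*(-beta2) \<le> (4/5)*(4/5)" using b by (intro mult_mono) auto
  have 4: "(-beta2)*(-beta2) \<ge> (3/4)*(3/4)" using b by (intro mult_mono) auto
  have 5: "b1*beta2 \<le> (19/10)*(-(3/4))"
  proof -
    have "b1*beta2 \<le> (19/10)*beta2" using a b by (intro mult_right_mono_neg) auto
    thus ?thesis using b by linarith
  qed
  have 6: "b1*beta2 \<ge> (39/20)*(-(4/5))"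
  proof -
    have "b1*beta2 \<ge> (39/20)*beta2" using a b by (intro mult_right_mono_neg) auto
    thus ?thesis using b by linarith
  qed
  show ?thesis unfolding pp_def qq_def power2_eq_square using a b 1 2 3 4 5 6 by linarith
qed

definition z0 :: complex where "z0 = Complex (-pp/2) (sqrt (4*qq - pp^2) / 2)"

lemma disc_pos: "4*qq - pp^2 > 0"
proof -
  have "pp^2 \<le> (1/5)^2" using pq_bounds by (intro power_mono) auto
  hence h: "pp^2 \<le> 1/25" by (simp add: power2_eq_square)
  have "qq \<ge> 2/5" using pq_bounds by simp
  thus ?thesis using h by linarith
qed

lemma z0_root: "z0^2 + of_real pp * z0 + of_real qq = 0"
proof -
  have s: "(sqrt (4*qq - pp^2))^2 = 4*qq - pp^2" using disc_pos by simp
  have ab: "\<bar>4 * qq - pp * pp\<bar> = 4 * qq - pp * pp" "\<bar>qq * 4 - pp * pp\<bar> = qq * 4 - pp * pp" using disc_pos by (simp_all add: power2_eq_square)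
  show ?thesis unfolding z0_def
    by (simp add: complex_eq_iff power2_eq_square ab field_simps)
qed

lemma Im_z0: "Im z0 > 0" unfolding z0_def using disc_pos by simp

lemma beta3_eq: "beta3 = z0"
  unfolding beta3_def
proof (rule the_equality)
  show "z0 ^ 4 - z0 ^ 3 - z0\<^sup>2 - z0 - 1 = 0 \<and> 0 < Im z0" using factor[of z0] z0_root Im_z0 by simp
  fix z assume h: "z ^ 4 - z ^ 3 - z\<^sup>2 - z - 1 = 0 \<and> 0 < Im z"
  have "z \<noteq> of_real b1" "z \<noteq> of_real beta2" using h by auto
  hence Q: "z^2 + of_real pp * z + of_real qq = 0" using h factor[of z] by simp
  have "(z - z0) * (z + z0 + of_real pp) = (z^2 + of_real pp * z + of_real qq) - (z0^2 + of_real pp * z0 + of_real qq)"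
    by (simp add: algebra_simps power2_eq_square)
  hence "(z - z0) * (z + z0 + of_real pp) = 0" using Q z0_root by simp
  moreover have "z + z0 + of_real pp \<noteq> 0"
  proof
    assume "z + z0 + of_real pp = 0"
    hence "Im (z + z0 + of_real pp) = 0" by simp
    thus False using h Im_z0 by simp
  qed
  ultimately show "z = z0" by simp
qed

lemma b3_facts: "beta3^4 = beta3^3 + beta3^2 + beta3 + 1 \<and> norm beta3 < 1 \<and> beta3 \<noteq> 0"
proof -
  have r: "beta3 ^ 4 - beta3 ^ 3 - beta3\<^sup>2 - beta3 - 1 = 0" unfolding beta3_eq using factor[of z0] z0_root by simp
  have "(norm z0)^2 = qq" unfolding z0_def cmod_def using disc_pos pq_bounds
    by (simp add: power2_eq_square field_simps) 
  hence "(norm z0)^2 < 1^2" using pq_bounds by simp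
  hence "norm z0 < 1" by (rule power_less_imp_less_base) simp
  moreover have "z0 \<noteq> 0" using Im_z0 by auto
  ultimately show ?thesis using r beta3_eq by (simp add: algebra_simps)
qed

lemma b2_facts': "beta2^4 = beta2^3 + beta2^2 + beta2 + 1 \<and> norm beta2 < 1 \<and> beta2 \<noteq> 0"
  using b2_facts unfolding Pr_def by auto



definition ps :: "nat set \<Rightarrow> nat \<Rightarrow> nat set \<Rightarrow> nat \<Rightarrow> nat" where
  "ps A K W n = (if n < K then (if n \<in> A then 1 else 0) else (if (n - K) mod 4 \<in> W then 1 else 0))"

definition pval :: "nat set \<Rightarrow> nat \<Rightarrow> nat set \<Rightarrow> 'a::field \<Rightarrow> 'a" where
  "pval A K W x = (\<Sum>i\<in>A. x^i) + (\<Sum>j\<in>W. x^(K+j)) / (1 - x^4)"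

definition uv :: "(int \<Rightarrow> int) \<Rightarrow> int set \<Rightarrow> 'a::field \<Rightarrow> 'a" where
  "uv c I x = (\<Sum>i\<in>I. of_int (c i) * x powi i)"

lemma norm4: fixes x :: "'a::real_normed_field" assumes "norm x < 1" shows "norm (x^4) < 1"
proof -
  have "norm x ^ 4 < 1" using assms by (simp add: power_less_one_iff)
  thus ?thesis by (simp add: norm_power)
qed

lemma spread_sums:
  fixes x :: "'a::{real_normed_field,banach}"
  assumes "norm x < 1" "j < 4"
  shows "(\<lambda>n. if K \<le> n \<and> (n - K) mod 4 = j then x^n else 0) sums (x^(K+j) / (1 - x^4))"
proof -
  let ?f = "\<lambda>n. if K \<le> n \<and> (n - K) mod 4 = j then x^n else 0"
  let ?g = "\<lambda>m::nat. K + j + 4*m"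
  have sm: "strict_mono ?g" by (rule strict_monoI) simp
  have z: "?f n = 0" if "n \<notin> range ?g" for n
  proof (rule ccontr)
    assume "?f n \<noteq> 0"
    hence h: "K \<le> n" "(n - K) mod 4 = j" by (auto split: if_splits)
    have "(n - K) mod 4 + 4 * ((n - K) div 4) = n - K" by (rule mod_mult_div_eq)
    hence "n = ?g ((n - K) div 4)" using h by linarith
    thus False using that by blast
  qed
  have fg: "?f (?g m) = x^(K+j) * (x^4)^m" for m
    using assms(2) by (simp add: power_add power_mult)
  have "(\<lambda>m. x^(K+j) * (x^4)^m) sums (x^(K+j) * (1 / (1 - x^4)))"
    by (rule sums_mult) (rule geometric_sums[OF norm4[OF assms(1)]])
  hence "(\<lambda>m. ?f (?g m)) sums (x^(K+j) / (1 - x^4))" unfolding fg by simp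
  thus ?thesis using sums_mono_reindex[OF sm, of ?f] z by blast
qed

lemma ps_sums:
  fixes x :: "'a::{real_normed_field,banach}"
  assumes "norm x < 1" "A \<subseteq> {..<K}" "W \<subseteq> {..<4}"
  shows "(\<lambda>n. of_nat (ps A K W n) * x^n) sums pval A K W x"
proof -
  have fA: "finite A" using assms(2) finite_subset by blast
  have fW: "finite W" using assms(3) finite_subset by blast
  have eq: "of_nat (ps A K W n) * x^n = (if n \<in> A then x^n else 0) +
      (\<Sum>j\<in>W. if K \<le> n \<and> (n - K) mod 4 = j then x^n else 0)" for n
  proof (cases "n < K")
    case True thus ?thesis by (simp add: ps_def)
  next
    case False
    hence "n \<notin> A" using assms(2) by auto
    moreover have "(\<Sum>j\<in>W. if K \<le> n \<and> (n - K) mod 4 = j then x^n else 0)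
        = (\<Sum>j\<in>W. if (n - K) mod 4 = j then x^n else 0)" using False by simp
    moreover have "\<dots> = (if (n - K) mod 4 \<in> W then x^n else 0)"
      using fW by (simp add: sum.delta)
    ultimately show ?thesis using False by (simp add: ps_def)
  qed
  have s1: "(\<lambda>n. if n \<in> A then x^n else 0) sums (\<Sum>i\<in>A. x^i)" by (rule sums_If_finite_set[OF fA])
  have s2: "(\<lambda>n. \<Sum>j\<in>W. if K \<le> n \<and> (n - K) mod 4 = j then x^n else 0) sums (\<Sum>j\<in>W. x^(K+j) / (1 - x^4))"
    by (rule sums_sum) (use assms in \<open>auto intro!: spread_sums\<close>)
  have "(\<lambda>n. of_nat (ps A K W n) * x^n) sums ((\<Sum>i\<in>A. x^i) + (\<Sum>j\<in>W. x^(K+j) / (1 - x^4)))"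
    unfolding eq by (rule sums_add[OF s1 s2])
  thus ?thesis unfolding pval_def by (simp add: sum_divide_distrib)
qed

lemma shifted_sums:
  fixes x :: "'a::{real_normed_field,banach}"
  assumes "norm x < 1" "A \<subseteq> {4..<K}" "W \<subseteq> {..<4}" "4 \<le> K"
  shows "(\<lambda>n. of_nat (ps A K W (n+4)) * x^(n+4)) sums pval A K W x"
proof -
  have "(\<Sum>i<4. of_nat (ps A K W i) * x^i) = 0"
    using assms(2,4) by (intro sum.neutral) (auto simp: ps_def)
  moreover have "(\<lambda>n. of_nat (ps A K W n) * x^n) sums pval A K W x"
    using assms by (intro ps_sums) auto
  ultimately show ?thesis using sums_iff_shift[of "\<lambda>n. of_nat (ps A K W n) * x^n" 4 "pval A K W x"] by simp
qed

lemma ps_period: "K \<le> n \<Longrightarrow> ps A K W (n+4) = ps A K W n"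
proof -
  assume "K \<le> n"
  hence "n + 4 - K = (n - K) + 4" by simp
  hence "(n + 4 - K) mod 4 = (n - K) mod 4" by (simp only: mod_add_self2)
  thus ?thesis using \<open>K \<le> n\<close> by (simp add: ps_def)
qed

definition win :: "(nat \<Rightarrow> nat) \<Rightarrow> nat \<Rightarrow> bool" where
  "win e i \<longleftrightarrow> (\<forall>k<4. e (i+k) = 1)"

lemma all4: "(\<forall>k<4::nat. P k) \<longleftrightarrow> P 0 \<and> P 1 \<and> P 2 \<and> P 3"
  by (simp add: numeral_eq_Suc All_less_Suc conj_ac)

lemma Dinf_check:
  assumes "4 \<le> K" "list_all (\<lambda>i. \<not> win (ps A K W) i) [4..<K+4]"
  shows "Dinf_from 4 (ps A K W)"
proof -
  have w: "\<not> win (ps A K W) i" if "4 \<le> i" for i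
    using that
  proof (induction i rule: less_induct)
    case (less i)
    show ?case
    proof (cases "i < K + 4")
      case True
      have "\<forall>j\<in>{4..<K+4}. \<not> win (ps A K W) j" using assms(2) by (simp only: list_all_iff set_upt)
      thus ?thesis using True less.prems by simp
    next
      case False
      define m where "m = i - 4"
      have m: "i = m + 4" "K \<le> m" "m < i" "4 \<le> m" using False assms(1) by (simp_all add: m_def)
      have "\<not> win (ps A K W) m" using less.IH[OF m(3) m(4)] .
      moreover have "ps A K W (i + k) = ps A K W (m + k)" for k
      proof -
        have e: "i + k = (m + k) + 4" using m(1) by simp
        have "ps A K W ((m+k)+4) = ps A K W (m+k)" using m(2) by (intro ps_period) simp
        thus ?thesis by (simp only: e)
      qed
      ultimately show ?thesis unfolding win_def by simp
    qed
  qed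
  show ?thesis unfolding Dinf_from_def
  proof (intro conjI allI impI)
    fix i :: nat assume "4 \<le> i"
    show "ps A K W i \<in> {0, 1}" by (simp add: ps_def)
  next
    fix i :: nat assume "4 \<le> i"
    show "\<not> (ps A K W i = 1 \<and> ps A K W (i + 1) = 1 \<and> ps A K W (i + 2) = 1 \<and> ps A K W (i + 3) = 1)"
      using w[OF \<open>4 \<le> i\<close>] unfolding win_def all4 by simp
  qed
qed

lemma idtool:
  fixes x :: "'a::field"
  assumes d: "1 - x^4 \<noteq> 0" and nz: "x \<noteq> 0"
    and SA: "(\<Sum>i\<in>A. x^i) = a" and SA': "(\<Sum>i\<in>A'. x^i) = a'"
    and SW: "(\<Sum>j\<in>W. x^(K+j)) = w" and SW': "(\<Sum>j\<in>W'. x^(K+j)) = w'"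
    and U: "x^3 * U = V"
    and H: "x^3 * ((a - a') * (1 - x^4) + w - w') - V * (1 - x^4) = Q * (x^4 - x^3 - x^2 - x - 1)"
    and r: "x^4 = x^3 + x^2 + x + 1"
  shows "pval A K W x - pval A' K W' x = U"
proof -
  define D where "D = 1 - x^4"
  have z: "x^4 - x^3 - x^2 - x - 1 = 0" using r by simp
  have h1: "x^3 * ((a - a') * D + w - w') - V * D = 0" using H unfolding z D_def by (simp only: mult_zero_right)
  hence "x^3 * ((a - a') * D + w - w') = V * D" by (simp only: right_minus_eq)
  also have "\<dots> = x^3 * (U * D)" by (simp only: U[symmetric] mult.assoc)
  finally have n: "(a - a') * D + w - w' = U * D" using nz by simp
  have dD: "D \<noteq> 0" using d D_def by simp
  have "pval A K W x - pval A' K W' x = (a + w / D) - (a' + w' / D)"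
    unfolding pval_def SA SA' SW SW' D_def ..
  also have "\<dots> = ((a - a') * D + w - w') / D"
    using dD by (simp add: field_simps)
  also have "\<dots> = U" using n dD by simp
  finally show ?thesis .
qed



lemma int03: "{0..3::int} = {0,1,2,3}" by auto

definition Concl :: "real \<times> complex \<Rightarrow> bool" where
  "Concl u \<longleftrightarrow> (\<exists>eps eps'. Dinf_from 4 eps \<and> Dinf_from 4 eps' \<and>
    (\<lambda>n. of_nat (eps (n+4)) * beta2 ^ (n+4)) sums
      (fst u + (\<Sum>n. of_nat (eps' (n+4)) * beta2 ^ (n+4))) \<and>
    summable (\<lambda>n. of_nat (eps' (n+4)) * beta2 ^ (n+4)) \<and>
    (\<lambda>n. of_nat (eps (n+4)) * beta3 ^ (n+4)) sums
      (snd u + (\<Sum>n. of_nat (eps' (n+4)) * beta3 ^ (n+4))) \<and>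
    summable (\<lambda>n. of_nat (eps' (n+4)) * beta3 ^ (n+4)))"

definition Good :: "real \<Rightarrow> complex \<Rightarrow> bool" where
  "Good U2 U3 \<longleftrightarrow> (\<forall>s\<in>{1,-1::int}. Concl (of_int s * U2, of_int s * U3))"

lemma r2: "beta2^4 = beta2^3 + beta2^2 + beta2 + 1" and nz2: "beta2 \<noteq> 0" and n2: "norm beta2 < 1"
  using b2_facts' by auto
lemma r3: "beta3^4 = beta3^3 + beta3^2 + beta3 + 1" and nz3: "beta3 \<noteq> 0" and n3: "norm beta3 < 1"
  using b3_facts by auto

lemma d_of: fixes x :: "'a::real_normed_field" assumes "norm x < 1" shows "1 - x^4 \<noteq> 0"
proof
  assume "1 - x^4 = 0"
  hence "x^4 = 1" by simp
  thus False using norm4[OF assms] by simp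
qed

lemma d2: "1 - beta2^4 \<noteq> 0" by (rule d_of[OF n2])
lemma d3: "1 - beta3^4 \<noteq> 0" by (rule d_of[OF n3])

lemma realize:
  assumes A: "A \<subseteq> {4..<K}" "A' \<subseteq> {4..<K}" "W \<subseteq> {..<4}" "W' \<subseteq> {..<4}" "4 \<le> K"
    and D: "Dinf_from 4 (ps A K W)" "Dinf_from 4 (ps A' K W')"
    and H2: "pval A K W beta2 - pval A' K W' beta2 = fst u"
    and H3: "pval A K W beta3 - pval A' K W' beta3 = snd u"
  shows "Concl u"
proof -
  have s2: "(\<lambda>n. of_nat (ps A K W (n+4)) * beta2^(n+4)) sums pval A K W beta2"
    using A by (intro shifted_sums n2) auto
  have s2': "(\<lambda>n. of_nat (ps A' K W' (n+4)) * beta2^(n+4)) sums pval A' K W' beta2"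
    using A by (intro shifted_sums n2) auto
  have s3: "(\<lambda>n. of_nat (ps A K W (n+4)) * beta3^(n+4)) sums pval A K W beta3"
    using A by (intro shifted_sums n3) auto
  have s3': "(\<lambda>n. of_nat (ps A' K W' (n+4)) * beta3^(n+4)) sums pval A' K W' beta3"
    using A by (intro shifted_sums n3) auto
  have e2: "pval A K W beta2 = fst u + (\<Sum>n. of_nat (ps A' K W' (n+4)) * beta2^(n+4))"
  proof -
    have "pval A K W beta2 = fst u + pval A' K W' beta2" using H2 by (simp add: algebra_simps)
    thus ?thesis using sums_unique[OF s2'] by simp
  qed
  have e3: "pval A K W beta3 = snd u + (\<Sum>n. of_nat (ps A' K W' (n+4)) * beta3^(n+4))"
  proof -
    have "pval A K W beta3 = snd u + pval A' K W' beta3" using H3 by (simp add: algebra_simps)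
    thus ?thesis using sums_unique[OF s3'] by simp
  qed
  show ?thesis unfolding Concl_def
    apply (rule exI[of _ "ps A K W"])
    apply (rule exI[of _ "ps A' K W'"])
    using D s2 s3 sums_summable[OF s2'] sums_summable[OF s3'] by (simp only: e2[symmetric] e3[symmetric])
qed

lemma good_intro:
  assumes "A \<subseteq> {4..<K}" "A' \<subseteq> {4..<K}" "W \<subseteq> {..<4}" "W' \<subseteq> {..<4}" "4 \<le> K"
    and "Dinf_from 4 (ps A K W)" "Dinf_from 4 (ps A' K W')"
    and H2: "pval A K W beta2 - pval A' K W' beta2 = U2"
    and H3: "pval A K W beta3 - pval A' K W' beta3 = U3"
  shows "Good U2 U3"
  unfolding Good_def
proof (intro ballI)
  fix s :: int assume "s \<in> {1, -1}"
  then consider "s = 1" | "s = -1" by blast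
  thus "Concl (of_int s * U2, of_int s * U3)"
  proof cases
    case 1 thus ?thesis using assms by (intro realize[of A K A' W W']) auto
  next
    case 2
    have "pval A' K W' beta2 - pval A K W beta2 = - U2" "pval A' K W' beta3 - pval A K W beta3 = - U3"
      using H2 H3 by auto
    thus ?thesis using assms 2 by (intro realize[of A' K A W' W]) auto
  qed
qed

lemma id_c0000: fixes x :: "'a::field"
  assumes r: "x^4 = x^3 + x^2 + x + 1" and nz: "x \<noteq> 0" and d: "1 - x^4 \<noteq> 0" and c: "c 0 = 0" "c 1 = 0" "c 2 = 0" "c 3 = 0"
  shows "pval {} 4 {} x - pval {} 4 {} x = uv c {0..3} x"
proof (rule idtool[OF d nz _ _ _ _ _ _ r])
  have u0: "uv c {0..3} x = 0" using c by (simp add: uv_def int03)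
  show "x^3 * (uv c {0..3} x) = 0" unfolding u0 using nz by (simp add: field_simps; algebra?)
  show "x^3 * ((0 - 0) * (1 - x^4) + 0 - 0) - 0 * (1 - x^4) = 0 * (x^4 - x^3 - x^2 - x - 1)"
    by algebra
qed simp_all

lemma good_c0000: assumes c: "c 0 = 0" "c 1 = 0" "c 2 = 0" "c 3 = 0"
  shows "Good (uv c {0..3} beta2) (uv c {0..3} beta3)"
proof (rule good_intro[where A="{}" and K=4 and W="{}" and A'="{}" and W'="{}"])
  show "pval {} 4 {} beta2 - pval {} 4 {} beta2 = uv c {0..3} beta2"
    by (rule id_c0000[OF r2 nz2 d2 c])
  show "pval {} 4 {} beta3 - pval {} 4 {} beta3 = uv c {0..3} beta3"
    by (rule id_c0000[OF r3 nz3 d3 c])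
  show "Dinf_from 4 (ps {} 4 {})" by (rule Dinf_check) (simp_all add: win_def all4 ps_def)
  show "Dinf_from 4 (ps {} 4 {})" by (rule Dinf_check) (simp_all add: win_def all4 ps_def)
qed auto

lemma id_c0001: fixes x :: "'a::field"
  assumes r: "x^4 = x^3 + x^2 + x + 1" and nz: "x \<noteq> 0" and d: "1 - x^4 \<noteq> 0" and c: "c 0 = 0" "c 1 = 0" "c 2 = 0" "c 3 = 1"
  shows "pval {} 4 {} x - pval {} 4 {0,1,2} x = uv c {0..3} x"
proof (rule idtool[OF d nz _ _ _ _ _ _ r])
  have u0: "uv c {0..3} x = (x^3)" using c by (simp add: uv_def int03)
  show "x^3 * (uv c {0..3} x) = (x^6)" unfolding u0 using nz by (simp add: field_simps; algebra?)
  show "x^3 * ((0 - 0) * (1 - x^4) + 0 - (x^4 + x^5 + x^6)) - (x^6) * (1 - x^4) = (x^6) * (x^4 - x^3 - x^2 - x - 1)"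
    by algebra
qed simp_all

lemma good_c0001: assumes c: "c 0 = 0" "c 1 = 0" "c 2 = 0" "c 3 = 1"
  shows "Good (uv c {0..3} beta2) (uv c {0..3} beta3)"
proof (rule good_intro[where A="{}" and K=4 and W="{}" and A'="{}" and W'="{0,1,2}"])
  show "pval {} 4 {} beta2 - pval {} 4 {0,1,2} beta2 = uv c {0..3} beta2"
    by (rule id_c0001[OF r2 nz2 d2 c])
  show "pval {} 4 {} beta3 - pval {} 4 {0,1,2} beta3 = uv c {0..3} beta3"
    by (rule id_c0001[OF r3 nz3 d3 c])
  show "Dinf_from 4 (ps {} 4 {})" by (rule Dinf_check) (simp_all add: win_def all4 ps_def)
  show "Dinf_from 4 (ps {} 4 {0,1,2})" by (rule Dinf_check) (simp_all add: win_def all4 ps_def)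
qed auto

lemma id_c0010: fixes x :: "'a::field"
  assumes r: "x^4 = x^3 + x^2 + x + 1" and nz: "x \<noteq> 0" and d: "1 - x^4 \<noteq> 0" and c: "c 0 = 0" "c 1 = 0" "c 2 = 1" "c 3 = 0"
  shows "pval {} 5 {1} x - pval {} 5 {2} x = uv c {0..3} x"
proof (rule idtool[OF d nz _ _ _ _ _ _ r])
  have u0: "uv c {0..3} x = (x^2)" using c by (simp add: uv_def int03)
  show "x^3 * (uv c {0..3} x) = (x^5)" unfolding u0 using nz by (simp add: field_simps; algebra?)
  show "x^3 * ((0 - 0) * (1 - x^4) + (x^6) - (x^7)) - (x^5) * (1 - x^4) = (x^5 - x^6) * (x^4 - x^3 - x^2 - x - 1)"
    by algebra
qed simp_all

lemma good_c0010: assumes c: "c 0 = 0" "c 1 = 0" "c 2 = 1" "c 3 = 0"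
  shows "Good (uv c {0..3} beta2) (uv c {0..3} beta3)"
proof (rule good_intro[where A="{}" and K=5 and W="{1}" and A'="{}" and W'="{2}"])
  show "pval {} 5 {1} beta2 - pval {} 5 {2} beta2 = uv c {0..3} beta2"
    by (rule id_c0010[OF r2 nz2 d2 c])
  show "pval {} 5 {1} beta3 - pval {} 5 {2} beta3 = uv c {0..3} beta3"
    by (rule id_c0010[OF r3 nz3 d3 c])
  show "Dinf_from 4 (ps {} 5 {1})" by (rule Dinf_check) (simp_all add: win_def all4 ps_def)
  show "Dinf_from 4 (ps {} 5 {2})" by (rule Dinf_check) (simp_all add: win_def all4 ps_def)
qed auto

lemma id_c0011: fixes x :: "'a::field"
  assumes r: "x^4 = x^3 + x^2 + x + 1" and nz: "x \<noteq> 0" and d: "1 - x^4 \<noteq> 0" and c: "c 0 = 0" "c 1 = 0" "c 2 = 1" "c 3 = 1"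
  shows "pval {6} 8 {} x - pval {4,5} 8 {} x = uv c {0..3} x"
proof (rule idtool[OF d nz _ _ _ _ _ _ r])
  have u0: "uv c {0..3} x = (x^2 + x^3)" using c by (simp add: uv_def int03)
  show "x^3 * (uv c {0..3} x) = (x^5 + x^6)" unfolding u0 using nz by (simp add: field_simps; algebra?)
  show "x^3 * (((x^6) - (x^4 + x^5)) * (1 - x^4) + 0 - 0) - (x^5 + x^6) * (1 - x^4) = (x^5 - x^9) * (x^4 - x^3 - x^2 - x - 1)"
    by algebra
qed simp_all

lemma good_c0011: assumes c: "c 0 = 0" "c 1 = 0" "c 2 = 1" "c 3 = 1"
  shows "Good (uv c {0..3} beta2) (uv c {0..3} beta3)"
proof (rule good_intro[where A="{6}" and K=8 and W="{}" and A'="{4,5}" and W'="{}"])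
  show "pval {6} 8 {} beta2 - pval {4,5} 8 {} beta2 = uv c {0..3} beta2"
    by (rule id_c0011[OF r2 nz2 d2 c])
  show "pval {6} 8 {} beta3 - pval {4,5} 8 {} beta3 = uv c {0..3} beta3"
    by (rule id_c0011[OF r3 nz3 d3 c])
  show "Dinf_from 4 (ps {6} 8 {})" by (rule Dinf_check) (simp_all add: win_def all4 ps_def)
  show "Dinf_from 4 (ps {4,5} 8 {})" by (rule Dinf_check) (simp_all add: win_def all4 ps_def)
qed auto

lemma id_c0100: fixes x :: "'a::field"
  assumes r: "x^4 = x^3 + x^2 + x + 1" and nz: "x \<noteq> 0" and d: "1 - x^4 \<noteq> 0" and c: "c 0 = 0" "c 1 = 1" "c 2 = 0" "c 3 = 0"
  shows "pval {} 4 {1} x - pval {} 4 {2} x = uv c {0..3} x"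
proof (rule idtool[OF d nz _ _ _ _ _ _ r])
  have u0: "uv c {0..3} x = (x)" using c by (simp add: uv_def int03)
  show "x^3 * (uv c {0..3} x) = (x^4)" unfolding u0 using nz by (simp add: field_simps; algebra?)
  show "x^3 * ((0 - 0) * (1 - x^4) + (x^5) - (x^6)) - (x^4) * (1 - x^4) = (x^4 - x^5) * (x^4 - x^3 - x^2 - x - 1)"
    by algebra
qed simp_all

lemma good_c0100: assumes c: "c 0 = 0" "c 1 = 1" "c 2 = 0" "c 3 = 0"
  shows "Good (uv c {0..3} beta2) (uv c {0..3} beta3)"
proof (rule good_intro[where A="{}" and K=4 and W="{1}" and A'="{}" and W'="{2}"])
  show "pval {} 4 {1} beta2 - pval {} 4 {2} beta2 = uv c {0..3} beta2"
    by (rule id_c0100[OF r2 nz2 d2 c])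
  show "pval {} 4 {1} beta3 - pval {} 4 {2} beta3 = uv c {0..3} beta3"
    by (rule id_c0100[OF r3 nz3 d3 c])
  show "Dinf_from 4 (ps {} 4 {1})" by (rule Dinf_check) (simp_all add: win_def all4 ps_def)
  show "Dinf_from 4 (ps {} 4 {2})" by (rule Dinf_check) (simp_all add: win_def all4 ps_def)
qed auto

lemma id_c0101: fixes x :: "'a::field"
  assumes r: "x^4 = x^3 + x^2 + x + 1" and nz: "x \<noteq> 0" and d: "1 - x^4 \<noteq> 0" and c: "c 0 = 0" "c 1 = 1" "c 2 = 0" "c 3 = 1"
  shows "pval {5} 6 {1,3} x - pval {} 6 {0,2} x = uv c {0..3} x"
proof (rule idtool[OF d nz _ _ _ _ _ _ r])
  have u0: "uv c {0..3} x = (x + x^3)" using c by (simp add: uv_def int03)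
  show "x^3 * (uv c {0..3} x) = (x^4 + x^6)" unfolding u0 using nz by (simp add: field_simps; algebra?)
  show "x^3 * (((x^5) - 0) * (1 - x^4) + (x^7 + x^9) - (x^6 + x^8)) - (x^4 + x^6) * (1 - x^4) = (x^4 - x^5 + x^6 - x^7) * (x^4 - x^3 - x^2 - x - 1)"
    by algebra
qed simp_all

lemma good_c0101: assumes c: "c 0 = 0" "c 1 = 1" "c 2 = 0" "c 3 = 1"
  shows "Good (uv c {0..3} beta2) (uv c {0..3} beta3)"
proof (rule good_intro[where A="{5}" and K=6 and W="{1,3}" and A'="{}" and W'="{0,2}"])
  show "pval {5} 6 {1,3} beta2 - pval {} 6 {0,2} beta2 = uv c {0..3} beta2"
    by (rule id_c0101[OF r2 nz2 d2 c])
  show "pval {5} 6 {1,3} beta3 - pval {} 6 {0,2} beta3 = uv c {0..3} beta3"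
    by (rule id_c0101[OF r3 nz3 d3 c])
  show "Dinf_from 4 (ps {5} 6 {1,3})" by (rule Dinf_check) (simp_all add: win_def all4 ps_def)
  show "Dinf_from 4 (ps {} 6 {0,2})" by (rule Dinf_check) (simp_all add: win_def all4 ps_def)
qed auto

lemma id_c0110: fixes x :: "'a::field"
  assumes r: "x^4 = x^3 + x^2 + x + 1" and nz: "x \<noteq> 0" and d: "1 - x^4 \<noteq> 0" and c: "c 0 = 0" "c 1 = 1" "c 2 = 1" "c 3 = 0"
  shows "pval {} 5 {0} x - pval {} 5 {2} x = uv c {0..3} x"
proof (rule idtool[OF d nz _ _ _ _ _ _ r])
  have u0: "uv c {0..3} x = (x + x^2)" using c by (simp add: uv_def int03)
  show "x^3 * (uv c {0..3} x) = (x^4 + x^5)" unfolding u0 using nz by (simp add: field_simps; algebra?)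
  show "x^3 * ((0 - 0) * (1 - x^4) + (x^5) - (x^7)) - (x^4 + x^5) * (1 - x^4) = (x^4 - x^6) * (x^4 - x^3 - x^2 - x - 1)"
    by algebra
qed simp_all

lemma good_c0110: assumes c: "c 0 = 0" "c 1 = 1" "c 2 = 1" "c 3 = 0"
  shows "Good (uv c {0..3} beta2) (uv c {0..3} beta3)"
proof (rule good_intro[where A="{}" and K=5 and W="{0}" and A'="{}" and W'="{2}"])
  show "pval {} 5 {0} beta2 - pval {} 5 {2} beta2 = uv c {0..3} beta2"
    by (rule id_c0110[OF r2 nz2 d2 c])
  show "pval {} 5 {0} beta3 - pval {} 5 {2} beta3 = uv c {0..3} beta3"
    by (rule id_c0110[OF r3 nz3 d3 c])
  show "Dinf_from 4 (ps {} 5 {0})" by (rule Dinf_check) (simp_all add: win_def all4 ps_def)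
  show "Dinf_from 4 (ps {} 5 {2})" by (rule Dinf_check) (simp_all add: win_def all4 ps_def)
qed auto

lemma id_c0111: fixes x :: "'a::field"
  assumes r: "x^4 = x^3 + x^2 + x + 1" and nz: "x \<noteq> 0" and d: "1 - x^4 \<noteq> 0" and c: "c 0 = 0" "c 1 = 1" "c 2 = 1" "c 3 = 1"
  shows "pval {5} 7 {} x - pval {4} 7 {} x = uv c {0..3} x"
proof (rule idtool[OF d nz _ _ _ _ _ _ r])
  have u0: "uv c {0..3} x = (x + x^2 + x^3)" using c by (simp add: uv_def int03)
  show "x^3 * (uv c {0..3} x) = (x^4 + x^5 + x^6)" unfolding u0 using nz by (simp add: field_simps; algebra?)
  show "x^3 * (((x^5) - (x^4)) * (1 - x^4) + 0 - 0) - (x^4 + x^5 + x^6) * (1 - x^4) = (x^4 - x^8) * (x^4 - x^3 - x^2 - x - 1)"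
    by algebra
qed simp_all

lemma good_c0111: assumes c: "c 0 = 0" "c 1 = 1" "c 2 = 1" "c 3 = 1"
  shows "Good (uv c {0..3} beta2) (uv c {0..3} beta3)"
proof (rule good_intro[where A="{5}" and K=7 and W="{}" and A'="{4}" and W'="{}"])
  show "pval {5} 7 {} beta2 - pval {4} 7 {} beta2 = uv c {0..3} beta2"
    by (rule id_c0111[OF r2 nz2 d2 c])
  show "pval {5} 7 {} beta3 - pval {4} 7 {} beta3 = uv c {0..3} beta3"
    by (rule id_c0111[OF r3 nz3 d3 c])
  show "Dinf_from 4 (ps {5} 7 {})" by (rule Dinf_check) (simp_all add: win_def all4 ps_def)
  show "Dinf_from 4 (ps {4} 7 {})" by (rule Dinf_check) (simp_all add: win_def all4 ps_def)
qed auto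

lemma id_c1000: fixes x :: "'a::field"
  assumes r: "x^4 = x^3 + x^2 + x + 1" and nz: "x \<noteq> 0" and d: "1 - x^4 \<noteq> 0" and c: "c 0 = 1" "c 1 = 0" "c 2 = 0" "c 3 = 0"
  shows "pval {} 4 {0} x - pval {} 4 {1} x = uv c {0..3} x"
proof (rule idtool[OF d nz _ _ _ _ _ _ r])
  have u0: "uv c {0..3} x = (1)" using c by (simp add: uv_def int03)
  show "x^3 * (uv c {0..3} x) = (x^3)" unfolding u0 using nz by (simp add: field_simps; algebra?)
  show "x^3 * ((0 - 0) * (1 - x^4) + (x^4) - (x^5)) - (x^3) * (1 - x^4) = (x^3 - x^4) * (x^4 - x^3 - x^2 - x - 1)"
    by algebra
qed simp_all

lemma good_c1000: assumes c: "c 0 = 1" "c 1 = 0" "c 2 = 0" "c 3 = 0"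
  shows "Good (uv c {0..3} beta2) (uv c {0..3} beta3)"
proof (rule good_intro[where A="{}" and K=4 and W="{0}" and A'="{}" and W'="{1}"])
  show "pval {} 4 {0} beta2 - pval {} 4 {1} beta2 = uv c {0..3} beta2"
    by (rule id_c1000[OF r2 nz2 d2 c])
  show "pval {} 4 {0} beta3 - pval {} 4 {1} beta3 = uv c {0..3} beta3"
    by (rule id_c1000[OF r3 nz3 d3 c])
  show "Dinf_from 4 (ps {} 4 {0})" by (rule Dinf_check) (simp_all add: win_def all4 ps_def)
  show "Dinf_from 4 (ps {} 4 {1})" by (rule Dinf_check) (simp_all add: win_def all4 ps_def)
qed auto

lemma id_c1001: fixes x :: "'a::field"
  assumes r: "x^4 = x^3 + x^2 + x + 1" and nz: "x \<noteq> 0" and d: "1 - x^4 \<noteq> 0" and c: "c 0 = 1" "c 1 = 0" "c 2 = 0" "c 3 = 1"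
  shows "pval {4} 6 {1} x - pval {5} 6 {3} x = uv c {0..3} x"
proof (rule idtool[OF d nz _ _ _ _ _ _ r])
  have u0: "uv c {0..3} x = (1 + x^3)" using c by (simp add: uv_def int03)
  show "x^3 * (uv c {0..3} x) = (x^3 + x^6)" unfolding u0 using nz by (simp add: field_simps; algebra?)
  show "x^3 * (((x^4) - (x^5)) * (1 - x^4) + (x^7) - (x^9)) - (x^3 + x^6) * (1 - x^4) = (x^3 - x^4 + x^6 - x^7) * (x^4 - x^3 - x^2 - x - 1)"
    by algebra
qed simp_all

lemma good_c1001: assumes c: "c 0 = 1" "c 1 = 0" "c 2 = 0" "c 3 = 1"
  shows "Good (uv c {0..3} beta2) (uv c {0..3} beta3)"
proof (rule good_intro[where A="{4}" and K=6 and W="{1}" and A'="{5}" and W'="{3}"])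
  show "pval {4} 6 {1} beta2 - pval {5} 6 {3} beta2 = uv c {0..3} beta2"
    by (rule id_c1001[OF r2 nz2 d2 c])
  show "pval {4} 6 {1} beta3 - pval {5} 6 {3} beta3 = uv c {0..3} beta3"
    by (rule id_c1001[OF r3 nz3 d3 c])
  show "Dinf_from 4 (ps {4} 6 {1})" by (rule Dinf_check) (simp_all add: win_def all4 ps_def)
  show "Dinf_from 4 (ps {5} 6 {3})" by (rule Dinf_check) (simp_all add: win_def all4 ps_def)
qed auto

lemma id_c1010: fixes x :: "'a::field"
  assumes r: "x^4 = x^3 + x^2 + x + 1" and nz: "x \<noteq> 0" and d: "1 - x^4 \<noteq> 0" and c: "c 0 = 1" "c 1 = 0" "c 2 = 1" "c 3 = 0"
  shows "pval {4} 5 {1,3} x - pval {} 5 {0,2} x = uv c {0..3} x"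
proof (rule idtool[OF d nz _ _ _ _ _ _ r])
  have u0: "uv c {0..3} x = (1 + x^2)" using c by (simp add: uv_def int03)
  show "x^3 * (uv c {0..3} x) = (x^3 + x^5)" unfolding u0 using nz by (simp add: field_simps; algebra?)
  show "x^3 * (((x^4) - 0) * (1 - x^4) + (x^6 + x^8) - (x^5 + x^7)) - (x^3 + x^5) * (1 - x^4) = (x^3 - x^4 + x^5 - x^6) * (x^4 - x^3 - x^2 - x - 1)"
    by algebra
qed simp_all

lemma good_c1010: assumes c: "c 0 = 1" "c 1 = 0" "c 2 = 1" "c 3 = 0"
  shows "Good (uv c {0..3} beta2) (uv c {0..3} beta3)"
proof (rule good_intro[where A="{4}" and K=5 and W="{1,3}" and A'="{}" and W'="{0,2}"])
  show "pval {4} 5 {1,3} beta2 - pval {} 5 {0,2} beta2 = uv c {0..3} beta2"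
    by (rule id_c1010[OF r2 nz2 d2 c])
  show "pval {4} 5 {1,3} beta3 - pval {} 5 {0,2} beta3 = uv c {0..3} beta3"
    by (rule id_c1010[OF r3 nz3 d3 c])
  show "Dinf_from 4 (ps {4} 5 {1,3})" by (rule Dinf_check) (simp_all add: win_def all4 ps_def)
  show "Dinf_from 4 (ps {} 5 {0,2})" by (rule Dinf_check) (simp_all add: win_def all4 ps_def)
qed auto

lemma id_c1011: fixes x :: "'a::field"
  assumes r: "x^4 = x^3 + x^2 + x + 1" and nz: "x \<noteq> 0" and d: "1 - x^4 \<noteq> 0" and c: "c 0 = 1" "c 1 = 0" "c 2 = 1" "c 3 = 1"
  shows "pval {4} 6 {0} x - pval {5} 6 {3} x = uv c {0..3} x"
proof (rule idtool[OF d nz _ _ _ _ _ _ r])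
  have u0: "uv c {0..3} x = (1 + x^2 + x^3)" using c by (simp add: uv_def int03)
  show "x^3 * (uv c {0..3} x) = (x^3 + x^5 + x^6)" unfolding u0 using nz by (simp add: field_simps; algebra?)
  show "x^3 * (((x^4) - (x^5)) * (1 - x^4) + (x^6) - (x^9)) - (x^3 + x^5 + x^6) * (1 - x^4) = (x^3 - x^4 + x^5 - x^7) * (x^4 - x^3 - x^2 - x - 1)"
    by algebra
qed simp_all

lemma good_c1011: assumes c: "c 0 = 1" "c 1 = 0" "c 2 = 1" "c 3 = 1"
  shows "Good (uv c {0..3} beta2) (uv c {0..3} beta3)"
proof (rule good_intro[where A="{4}" and K=6 and W="{0}" and A'="{5}" and W'="{3}"])
  show "pval {4} 6 {0} beta2 - pval {5} 6 {3} beta2 = uv c {0..3} beta2"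
    by (rule id_c1011[OF r2 nz2 d2 c])
  show "pval {4} 6 {0} beta3 - pval {5} 6 {3} beta3 = uv c {0..3} beta3"
    by (rule id_c1011[OF r3 nz3 d3 c])
  show "Dinf_from 4 (ps {4} 6 {0})" by (rule Dinf_check) (simp_all add: win_def all4 ps_def)
  show "Dinf_from 4 (ps {5} 6 {3})" by (rule Dinf_check) (simp_all add: win_def all4 ps_def)
qed auto

lemma id_c1100: fixes x :: "'a::field"
  assumes r: "x^4 = x^3 + x^2 + x + 1" and nz: "x \<noteq> 0" and d: "1 - x^4 \<noteq> 0" and c: "c 0 = 1" "c 1 = 1" "c 2 = 0" "c 3 = 0"
  shows "pval {} 4 {0} x - pval {} 4 {2} x = uv c {0..3} x"
proof (rule idtool[OF d nz _ _ _ _ _ _ r])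
  have u0: "uv c {0..3} x = (1 + x)" using c by (simp add: uv_def int03)
  show "x^3 * (uv c {0..3} x) = (x^3 + x^4)" unfolding u0 using nz by (simp add: field_simps; algebra?)
  show "x^3 * ((0 - 0) * (1 - x^4) + (x^4) - (x^6)) - (x^3 + x^4) * (1 - x^4) = (x^3 - x^5) * (x^4 - x^3 - x^2 - x - 1)"
    by algebra
qed simp_all

lemma good_c1100: assumes c: "c 0 = 1" "c 1 = 1" "c 2 = 0" "c 3 = 0"
  shows "Good (uv c {0..3} beta2) (uv c {0..3} beta3)"
proof (rule good_intro[where A="{}" and K=4 and W="{0}" and A'="{}" and W'="{2}"])
  show "pval {} 4 {0} beta2 - pval {} 4 {2} beta2 = uv c {0..3} beta2"
    by (rule id_c1100[OF r2 nz2 d2 c])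
  show "pval {} 4 {0} beta3 - pval {} 4 {2} beta3 = uv c {0..3} beta3"
    by (rule id_c1100[OF r3 nz3 d3 c])
  show "Dinf_from 4 (ps {} 4 {0})" by (rule Dinf_check) (simp_all add: win_def all4 ps_def)
  show "Dinf_from 4 (ps {} 4 {2})" by (rule Dinf_check) (simp_all add: win_def all4 ps_def)
qed auto

lemma id_c1101: fixes x :: "'a::field"
  assumes r: "x^4 = x^3 + x^2 + x + 1" and nz: "x \<noteq> 0" and d: "1 - x^4 \<noteq> 0" and c: "c 0 = 1" "c 1 = 1" "c 2 = 0" "c 3 = 1"
  shows "pval {4} 6 {1} x - pval {} 6 {0} x = uv c {0..3} x"
proof (rule idtool[OF d nz _ _ _ _ _ _ r])
  have u0: "uv c {0..3} x = (1 + x + x^3)" using c by (simp add: uv_def int03)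
  show "x^3 * (uv c {0..3} x) = (x^3 + x^4 + x^6)" unfolding u0 using nz by (simp add: field_simps; algebra?)
  show "x^3 * (((x^4) - 0) * (1 - x^4) + (x^7) - (x^6)) - (x^3 + x^4 + x^6) * (1 - x^4) = (x^3 - x^5 + x^6 - x^7) * (x^4 - x^3 - x^2 - x - 1)"
    by algebra
qed simp_all

lemma good_c1101: assumes c: "c 0 = 1" "c 1 = 1" "c 2 = 0" "c 3 = 1"
  shows "Good (uv c {0..3} beta2) (uv c {0..3} beta3)"
proof (rule good_intro[where A="{4}" and K=6 and W="{1}" and A'="{}" and W'="{0}"])
  show "pval {4} 6 {1} beta2 - pval {} 6 {0} beta2 = uv c {0..3} beta2"
    by (rule id_c1101[OF r2 nz2 d2 c])
  show "pval {4} 6 {1} beta3 - pval {} 6 {0} beta3 = uv c {0..3} beta3"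
    by (rule id_c1101[OF r3 nz3 d3 c])
  show "Dinf_from 4 (ps {4} 6 {1})" by (rule Dinf_check) (simp_all add: win_def all4 ps_def)
  show "Dinf_from 4 (ps {} 6 {0})" by (rule Dinf_check) (simp_all add: win_def all4 ps_def)
qed auto

lemma id_c1110: fixes x :: "'a::field"
  assumes r: "x^4 = x^3 + x^2 + x + 1" and nz: "x \<noteq> 0" and d: "1 - x^4 \<noteq> 0" and c: "c 0 = 1" "c 1 = 1" "c 2 = 1" "c 3 = 0"
  shows "pval {4} 5 {3} x - pval {} 5 {2} x = uv c {0..3} x"
proof (rule idtool[OF d nz _ _ _ _ _ _ r])
  have u0: "uv c {0..3} x = (1 + x + x^2)" using c by (simp add: uv_def int03)
  show "x^3 * (uv c {0..3} x) = (x^3 + x^4 + x^5)" unfolding u0 using nz by (simp add: field_simps; algebra?)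
  show "x^3 * (((x^4) - 0) * (1 - x^4) + (x^8) - (x^7)) - (x^3 + x^4 + x^5) * (1 - x^4) = (x^3 - x^6) * (x^4 - x^3 - x^2 - x - 1)"
    by algebra
qed simp_all

lemma good_c1110: assumes c: "c 0 = 1" "c 1 = 1" "c 2 = 1" "c 3 = 0"
  shows "Good (uv c {0..3} beta2) (uv c {0..3} beta3)"
proof (rule good_intro[where A="{4}" and K=5 and W="{3}" and A'="{}" and W'="{2}"])
  show "pval {4} 5 {3} beta2 - pval {} 5 {2} beta2 = uv c {0..3} beta2"
    by (rule id_c1110[OF r2 nz2 d2 c])
  show "pval {4} 5 {3} beta3 - pval {} 5 {2} beta3 = uv c {0..3} beta3"
    by (rule id_c1110[OF r3 nz3 d3 c])
  show "Dinf_from 4 (ps {4} 5 {3})" by (rule Dinf_check) (simp_all add: win_def all4 ps_def)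
  show "Dinf_from 4 (ps {} 5 {2})" by (rule Dinf_check) (simp_all add: win_def all4 ps_def)
qed auto

lemma id_A: fixes x :: "'a::field"
  assumes r: "x^4 = x^3 + x^2 + x + 1" and nz: "x \<noteq> 0" and d: "1 - x^4 \<noteq> 0"
  shows "pval {4} 6 {0,1} x - pval {4,5} 6 {2,3} x = uv (\<lambda>_. 1) {-1,0,2} x"
proof (rule idtool[OF d nz _ _ _ _ _ _ r])
  have u0: "uv (\<lambda>_. 1) {-1,0,2} x = (inverse (x^1) + 1 + x^2)" by (simp add: uv_def power_int_minus)
  show "x^3 * (uv (\<lambda>_. 1) {-1,0,2} x) = (x^2 + x^3 + x^5)" unfolding u0 using nz by (simp add: field_simps; algebra?)
  show "x^3 * (((x^4) - (x^4 + x^5)) * (1 - x^4) + (x^6 + x^7) - (x^8 + x^9)) - (x^2 + x^3 + x^5) * (1 - x^4) = (x^2 - x^4 + x^5 - x^7) * (x^4 - x^3 - x^2 - x - 1)"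
    by algebra
qed simp_all

lemma good_A: 
  shows "Good (uv (\<lambda>_. 1) {-1,0,2} beta2) (uv (\<lambda>_. 1) {-1,0,2} beta3)"
proof (rule good_intro[where A="{4}" and K=6 and W="{0,1}" and A'="{4,5}" and W'="{2,3}"])
  show "pval {4} 6 {0,1} beta2 - pval {4,5} 6 {2,3} beta2 = uv (\<lambda>_. 1) {-1,0,2} beta2"
    by (rule id_A[OF r2 nz2 d2])
  show "pval {4} 6 {0,1} beta3 - pval {4,5} 6 {2,3} beta3 = uv (\<lambda>_. 1) {-1,0,2} beta3"
    by (rule id_A[OF r3 nz3 d3])
  show "Dinf_from 4 (ps {4} 6 {0,1})" by (rule Dinf_check) (simp_all add: win_def all4 ps_def)
  show "Dinf_from 4 (ps {4,5} 6 {2,3})" by (rule Dinf_check) (simp_all add: win_def all4 ps_def)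
qed auto

lemma id_B: fixes x :: "'a::field"
  assumes r: "x^4 = x^3 + x^2 + x + 1" and nz: "x \<noteq> 0" and d: "1 - x^4 \<noteq> 0"
  shows "pval {5} 6 {0,3} x - pval {4} 6 {1,2} x = uv (\<lambda>_. 1) {-2,-1,1} x"
proof (rule idtool[OF d nz _ _ _ _ _ _ r])
  have u0: "uv (\<lambda>_. 1) {-2,-1,1} x = (inverse (x^2) + inverse (x^1) + x^1)" by (simp add: uv_def power_int_minus)
  show "x^3 * (uv (\<lambda>_. 1) {-2,-1,1} x) = (x + x^2 + x^4)" unfolding u0 using nz by (simp add: field_simps; algebra?)
  show "x^3 * (((x^5) - (x^4)) * (1 - x^4) + (x^6 + x^9) - (x^7 + x^8)) - (x + x^2 + x^4) * (1 - x^4) = (x - x^3 + x^4 - x^6) * (x^4 - x^3 - x^2 - x - 1)"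
    by algebra
qed simp_all

lemma good_B: 
  shows "Good (uv (\<lambda>_. 1) {-2,-1,1} beta2) (uv (\<lambda>_. 1) {-2,-1,1} beta3)"
proof (rule good_intro[where A="{5}" and K=6 and W="{0,3}" and A'="{4}" and W'="{1,2}"])
  show "pval {5} 6 {0,3} beta2 - pval {4} 6 {1,2} beta2 = uv (\<lambda>_. 1) {-2,-1,1} beta2"
    by (rule id_B[OF r2 nz2 d2])
  show "pval {5} 6 {0,3} beta3 - pval {4} 6 {1,2} beta3 = uv (\<lambda>_. 1) {-2,-1,1} beta3"
    by (rule id_B[OF r3 nz3 d3])
  show "Dinf_from 4 (ps {5} 6 {0,3})" by (rule Dinf_check) (simp_all add: win_def all4 ps_def)
  show "Dinf_from 4 (ps {4} 6 {1,2})" by (rule Dinf_check) (simp_all add: win_def all4 ps_def)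
qed auto

lemma id_C: fixes x :: "'a::field"
  assumes r: "x^4 = x^3 + x^2 + x + 1" and nz: "x \<noteq> 0" and d: "1 - x^4 \<noteq> 0"
  shows "pval {4} 5 {0,3} x - pval {} 5 {1,2} x = uv (\<lambda>_. 1) {-3,-2,0,3} x"
proof (rule idtool[OF d nz _ _ _ _ _ _ r])
  have u0: "uv (\<lambda>_. 1) {-3,-2,0,3} x = (inverse (x^3) + inverse (x^2) + 1 + x^3)" by (simp add: uv_def power_int_minus)
  show "x^3 * (uv (\<lambda>_. 1) {-3,-2,0,3} x) = (1 + x + x^3 + x^6)" unfolding u0 using nz by (simp add: field_simps; algebra?)
  show "x^3 * (((x^4) - 0) * (1 - x^4) + (x^5 + x^8) - (x^6 + x^7)) - (1 + x + x^3 + x^6) * (1 - x^4) = (1 - x^2 + x^3 - x^5) * (x^4 - x^3 - x^2 - x - 1)"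
    by algebra
qed simp_all

lemma good_C: 
  shows "Good (uv (\<lambda>_. 1) {-3,-2,0,3} beta2) (uv (\<lambda>_. 1) {-3,-2,0,3} beta3)"
proof (rule good_intro[where A="{4}" and K=5 and W="{0,3}" and A'="{}" and W'="{1,2}"])
  show "pval {4} 5 {0,3} beta2 - pval {} 5 {1,2} beta2 = uv (\<lambda>_. 1) {-3,-2,0,3} beta2"
    by (rule id_C[OF r2 nz2 d2])
  show "pval {4} 5 {0,3} beta3 - pval {} 5 {1,2} beta3 = uv (\<lambda>_. 1) {-3,-2,0,3} beta3"
    by (rule id_C[OF r3 nz3 d3])
  show "Dinf_from 4 (ps {4} 5 {0,3})" by (rule Dinf_check) (simp_all add: win_def all4 ps_def)
  show "Dinf_from 4 (ps {} 5 {1,2})" by (rule Dinf_check) (simp_all add: win_def all4 ps_def)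
qed auto

lemma uv_scale: "uv (\<lambda>i. s * c i) I x = of_int s * uv c I x"
  by (simp add: uv_def sum_distrib_left mult.assoc)

lemma uv_const: "uv (\<lambda>_. s) I x = of_int s * uv (\<lambda>_. 1) I x"
  by (simp add: uv_def sum_distrib_left)

lemma lc: "lincomb f I = (uv f I beta2, uv f I beta3)"
  by (simp add: lincomb_def alpha_def uv_def)

lemma Good_use: "Good U2 U3 \<Longrightarrow> s \<in> {1, -1} \<Longrightarrow> Concl (of_int s * U2, of_int s * U3)"
  unfolding Good_def by blast

lemma ConclS: assumes "u \<in> S" shows "Concl u"
proof -
  from assms consider
    (a) s c where "u = lincomb (\<lambda>i. s * c i) {0..3}" "s \<in> {1, -1}" "\<forall>i. c i \<in> {0, 1}" "\<not> (\<forall>i\<in>{0..3}. c i = 1)"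
  | (b) s where "u = lincomb (\<lambda>_. s) {-1, 0, 2}" "s \<in> {1, -1}"
  | (c) s where "u = lincomb (\<lambda>_. s) {-2, -1, 1}" "s \<in> {1, -1}"
  | (d) s where "u = lincomb (\<lambda>_. s) {-3, -2, 0, 3}" "s \<in> {1, -1}"
    unfolding S_def by blast
  thus ?thesis
  proof cases
    case (a s c)
    have c0: "c 0 = 0 \<or> c 0 = 1" and c1: "c 1 = 0 \<or> c 1 = 1" and c2: "c 2 = 0 \<or> c 2 = 1" and c3: "c 3 = 0 \<or> c 3 = 1"
      using a(3) by auto
    have nall: "\<not> (c 0 = 1 \<and> c 1 = 1 \<and> c 2 = 1 \<and> c 3 = 1)" using a(4) unfolding int03 by auto
    have G: "Good (uv c {0..3} beta2) (uv c {0..3} beta3)"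
      using c0 c1 c2 c3 nall
      by (elim disjE) (simp_all add: good_c0000 good_c0001 good_c0010 good_c0011 good_c0100 good_c0101
          good_c0110 good_c0111 good_c1000 good_c1001 good_c1010 good_c1011 good_c1100 good_c1101 good_c1110)
    show ?thesis using Good_use[OF G a(2)] a(1) by (simp add: lc uv_scale)
  next
    case (b s)
    show ?thesis using Good_use[OF good_A b(2)] b(1) by (simp add: lc uv_const[of s])
  next
    case (c s)
    show ?thesis using Good_use[OF good_B c(2)] c(1) by (simp add: lc uv_const[of s])
  next
    case (d s)
    show ?thesis using Good_use[OF good_C d(2)] d(1) by (simp add: lc uv_const[of s])
  qed
qed

theorem lemma3p6:
  fixes u :: "real \<times> complex"
  assumes "u \<in> S"
  shows "\<exists>eps eps'. Dinf_from 4 eps \<and> Dinf_from 4 eps' \<and>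
    (\<lambda>n. of_nat (eps (n+4)) * beta2 ^ (n+4)) sums
      (fst u + (\<Sum>n. of_nat (eps' (n+4)) * beta2 ^ (n+4))) \<and>
    summable (\<lambda>n. of_nat (eps' (n+4)) * beta2 ^ (n+4)) \<and>
    (\<lambda>n. of_nat (eps (n+4)) * beta3 ^ (n+4)) sums
      (snd u + (\<Sum>n. of_nat (eps' (n+4)) * beta3 ^ (n+4))) \<and>
    summable (\<lambda>n. of_nat (eps' (n+4)) * beta3 ^ (n+4))"
  using ConclS[OF assms] unfolding Concl_def .


end
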